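(* Let $I$ be a resident-minimal instance and $(r_0,h_0)\in\mathrm{tent}(I)\setminus\mathrm{pend}(I)$. Then there is a (general) prescription $(P,X)$ for $I$ with $(r_0,h_0)\in\mathrm{tgs}(P,X)$ if and only if there is a resident-changeless and hospital-complete extension $I'$ of $I$ and a prescription $(P,Y)$ for $I'$ with $(r_0,h_0)\in\mathrm{tgs}(P,Y)$.
   Context: An instance $I$ consists of finite disjoint sets $R$ (residents) and $H$ (hospitals), a positive integer quota $q_h$ for each $h\in H$, for each $r\in R$ a preference list of $r$ (a sequence of distinct members of $H$, not necessarily all), and for each $h\in H$ a preference list of $h$ (a sequence of distinct members of $R$). Instances considered together share $R,H$ and quotas. A list is complete if it contains every member of the opposite side; an instance is hospital-complete if every hospital's list is complete. A match is a pair $(r,h)\in R\times H$. For a set $M$ of matches, $\mathrm{res}_h M=\{r:(r,h)\in M\}$, $\mathrm{res}\,M=\{r:(r,h)\in M\text{ for some }h\}$. $J$ is an extension of $I$ if every list of $J$ has the corresponding list of $I$ as a prefix; it is resident-changeless if every resident's list is the same in $I$ and $J$. An event is $(r,h)^+$ (proposal) or $(r,h)^-$ (rejection). For an event sequence $\sigma$, $\mathrm{prop}(\sigma)$, $\mathrm{rej}(\sigma)$ are the sets of matches proposed/rejected in $\sigma$, $\mathrm{tent}(\sigma)=\mathrm{prop}(\sigma)\setminus\mathrm{rej}(\sigma)$, and $\mathrm{pend}_I(\sigma)$ is the set of $(r,h)\in\mathrm{tent}(\sigma)$ with $r$ not on the list of $h$ in $I$. A match $(r,h)\in M$ is ousted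 from $M$ in $I$ if the list of $h$ in $I$ contains at least $q_h$ residents of $\mathrm{res}_h M$ and either $r$ is not on it or $r$ is preceded on it by at least $q_h$ residents of $\mathrm{res}_h M$. $I$-feasible sequences: the empty sequence is $I$-feasible; if $\sigma$ is $I$-feasible then $\sigma+(r,h)^+$ is $I$-feasible if $r\notin\mathrm{res}\,\mathrm{tent}(\sigma)$, $(r,h)\notin\mathrm{prop}(\sigma)$, $h$ is on the list of $r$ in $I$ and $(r,h')\in\mathrm{rej}(\sigma)$ for every $h'$ preceding $h$ on it; and $\sigma+(r,h)^-$ is $I$-feasible if $(r,h)$ is ousted from $\mathrm{prop}(\sigma)$ in $I$ and $(r,h)\notin\mathrm{rej}(\sigma)$. All maximal $I$-feasible sequences contain the same events; $\mathrm{prop}(I),\mathrm{rej}(I),\mathrm{tent}(I),\mathrm{pend}(I)$ denote $\mathrm{prop}(\sigma),\mathrm{rej}(\sigma),\mathrm{tent}(\sigma),\mathrm{pend}_I(\sigma)$ for any maximal $I$-feasible $\sigma$. $I$ is resident-minimal if $\mathrm{prop}(I)$ equals the set of matches $(r,h)$ with $h$ on the list of $r$ in $I$. For a resident-minimal instance $I$, a (general) prescription for $I$ is a pair $(P,X)$ of sets of matches such that: (P1) $P\cap\mathrm{prop}(I)=\emptyset$; (P2) for each $r\in R$ there is at most one $h$ with $(r,h)\in P$; (P3) $X\subseteq\mathrm{tent}(I)$; (P4) $\mathrm{res}\,P\cap\mathrm{res}\,\mathrm{tent}(I)\subseteq\mathrm{res}\,X$; (P5) for each $h$, $|\mathrm{res}_h(P\cup(\mathrm{tent}(I)\setminus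 X))|\le q_h$, with equality if $\mathrm{res}_h X\ne\emptyset$; (P6') for each $h$, every member of $\mathrm{res}_h(P\cup((\mathrm{tent}(I)\setminus\mathrm{pend}(I))\setminus X))$ precedes all members of $\mathrm{res}_h(X\setminus\mathrm{pend}(I))$ in the list of $h$ in $I$, and if $\mathrm{res}_h(X\setminus\mathrm{pend}(I))\ne\emptyset$ then $\mathrm{res}_h\,\mathrm{pend}(I)\subseteq\mathrm{res}_h X$. When $I$ is moreover hospital-complete (so $\mathrm{pend}(I)=\emptyset$), (P6') reads: (P6) every member of $\mathrm{res}_h(P\cup(\mathrm{tent}(I)\setminus X))$ precedes all members of $\mathrm{res}_h X$ in the list of $h$. The target set is $\mathrm{tgs}(P,X)=\{(r,h)\in X: r\notin\mathrm{res}\,P\}$. *)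

theory Defs
  imports Main
begin

text \<open>The sets R, H and the quota function q
  are shared by all instances and are passed as explicit parameters.\<close>

record ('r, 'h) sm_instance =
  rlist :: "'r \<Rightarrow> 'h list"
  hlist :: "'h \<Rightarrow> 'r list"

definition wf_instance :: "'r set \<Rightarrow> 'h set \<Rightarrow> ('h \<Rightarrow> nat) \<Rightarrow> ('r, 'h) sm_instance \<Rightarrow> bool" where
  "wf_instance R H q I \<longleftrightarrow>
     finite R \<and> finite H \<and> (\<forall>h\<in>H. 0 < q h) \<and>
     (\<forall>r\<in>R. distinct (rlist I r) \<and> set (rlist I r) \<subseteq> H) \<and>
     (\<forall>h\<in>H. distinct (hlist I h) \<and> set (hlist I h) \<subseteq> R) \<and>
     (\<forall>r. r \<notin> R \<longrightarrow> rlist I r = []) \<and>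
     (\<forall>h. h \<notin> H \<longrightarrow> hlist I h = [])"

definition hospital_complete :: "'r set \<Rightarrow> 'h set \<Rightarrow> ('r, 'h) sm_instance \<Rightarrow> bool" where
  "hospital_complete R H I \<longleftrightarrow> (\<forall>h\<in>H. set (hlist I h) = R)"

definition is_extension :: "'r set \<Rightarrow> 'h set \<Rightarrow> ('r, 'h) sm_instance \<Rightarrow> ('r, 'h) sm_instance \<Rightarrow> bool" where
  "is_extension R H I J \<longleftrightarrow>
     (\<forall>r\<in>R. (\<exists>ys. rlist J r = rlist I r @ ys)) \<and> (\<forall>h\<in>H. (\<exists>ys. hlist J h = hlist I h @ ys))"

definition resident_changeless :: "'r set \<Rightarrow> ('r, 'h) sm_instance \<Rightarrow> ('r, 'h) sm_instance \<Rightarrow> bool" where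
  "resident_changeless R I J \<longleftrightarrow> (\<forall>r\<in>R. rlist J r = rlist I r)"

definition precedes_in :: "'a list \<Rightarrow> 'a \<Rightarrow> 'a \<Rightarrow> bool" where
  "precedes_in L x y \<longleftrightarrow> (\<exists>i j. i < j \<and> j < length L \<and> L ! i = x \<and> L ! j = y)"

definition res_at :: "'h \<Rightarrow> ('r \<times> 'h) set \<Rightarrow> 'r set" where
  "res_at h M = {r. (r, h) \<in> M}"

definition res :: "('r \<times> 'h) set \<Rightarrow> 'r set" where
  "res M = {r. \<exists>h. (r, h) \<in> M}"

datatype ('r, 'h) event = Propose 'r 'h | Reject 'r 'h

definition propS :: "('r, 'h) event list \<Rightarrow> ('r \<times> 'h) set" where
  "propS \<sigma> = {(r, h). Propose r h \<in> set \<sigma>}"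

definition rejS :: "('r, 'h) event list \<Rightarrow> ('r \<times> 'h) set" where
  "rejS \<sigma> = {(r, h). Reject r h \<in> set \<sigma>}"

definition tentS :: "('r, 'h) event list \<Rightarrow> ('r \<times> 'h) set" where
  "tentS \<sigma> = propS \<sigma> - rejS \<sigma>"

definition pendS :: "('r, 'h) sm_instance \<Rightarrow> ('r, 'h) event list \<Rightarrow> ('r \<times> 'h) set" where
  "pendS I \<sigma> = {(r, h) \<in> tentS \<sigma>. r \<notin> set (hlist I h)}"

text \<open>(r,h) in M is ousted from M in I.  The residents preceding r on the list L of h
  are those in takeWhile (\<lambda>x. x \<noteq> r) L (when r is on L).\<close>
definition ousted :: "('h \<Rightarrow> nat) \<Rightarrow> ('r, 'h) sm_instance \<Rightarrow> ('r \<times> 'h) set \<Rightarrow> 'r \<Rightarrow> 'h \<Rightarrow> bool" where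
  "ousted q I M r h \<longleftrightarrow>
     (r, h) \<in> M \<and>
     q h \<le> card (set (hlist I h) \<inter> res_at h M) \<and>
     (r \<notin> set (hlist I h) \<or>
      q h \<le> card (set (takeWhile (\<lambda>x. x \<noteq> r) (hlist I h)) \<inter> res_at h M))"

inductive feasible :: "('h \<Rightarrow> nat) \<Rightarrow> ('r, 'h) sm_instance \<Rightarrow> ('r, 'h) event list \<Rightarrow> bool"
  for q I where
  feasible_Nil: "feasible q I []"
| feasible_Prop: "feasible q I \<sigma> \<Longrightarrow> r \<notin> res (tentS \<sigma>) \<Longrightarrow> (r, h) \<notin> propS \<sigma> \<Longrightarrow>
    h \<in> set (rlist I r) \<Longrightarrow>
    (\<forall>h'. precedes_in (rlist I r) h' h \<longrightarrow> (r, h') \<in> rejS \<sigma>) \<Longrightarrow>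
    feasible q I (\<sigma> @ [Propose r h])"
| feasible_Rej: "feasible q I \<sigma> \<Longrightarrow> ousted q I (propS \<sigma>) r h \<Longrightarrow> (r, h) \<notin> rejS \<sigma> \<Longrightarrow>
    feasible q I (\<sigma> @ [Reject r h])"

definition maximal_feasible :: "('h \<Rightarrow> nat) \<Rightarrow> ('r, 'h) sm_instance \<Rightarrow> ('r, 'h) event list \<Rightarrow> bool" where
  "maximal_feasible q I \<sigma> \<longleftrightarrow> feasible q I \<sigma> \<and> \<not> (\<exists>e. feasible q I (\<sigma> @ [e]))"

text \<open>Some maximal feasible sequence (all such contain the same events, by the paper).\<close>
definition msq :: "('h \<Rightarrow> nat) \<Rightarrow> ('r, 'h) sm_instance \<Rightarrow> ('r, 'h) event list" where
  "msq q I = (SOME \<sigma>. maximal_feasible q I \<sigma>)"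

definition propI :: "('h \<Rightarrow> nat) \<Rightarrow> ('r, 'h) sm_instance \<Rightarrow> ('r \<times> 'h) set" where
  "propI q I = propS (msq q I)"
definition rejI :: "('h \<Rightarrow> nat) \<Rightarrow> ('r, 'h) sm_instance \<Rightarrow> ('r \<times> 'h) set" where
  "rejI q I = rejS (msq q I)"
definition tentI :: "('h \<Rightarrow> nat) \<Rightarrow> ('r, 'h) sm_instance \<Rightarrow> ('r \<times> 'h) set" where
  "tentI q I = tentS (msq q I)"
definition pendI :: "('h \<Rightarrow> nat) \<Rightarrow> ('r, 'h) sm_instance \<Rightarrow> ('r \<times> 'h) set" where
  "pendI q I = pendS I (msq q I)"

definition resident_minimal :: "('h \<Rightarrow> nat) \<Rightarrow> ('r, 'h) sm_instance \<Rightarrow> bool" where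
  "resident_minimal q I \<longleftrightarrow> propI q I = {(r, h). h \<in> set (rlist I r)}"

definition prescription ::
  "'r set \<Rightarrow> 'h set \<Rightarrow> ('h \<Rightarrow> nat) \<Rightarrow> ('r, 'h) sm_instance \<Rightarrow> ('r \<times> 'h) set \<Rightarrow> ('r \<times> 'h) set \<Rightarrow> bool" where
  "prescription R H q I P X \<longleftrightarrow>
     resident_minimal q I \<and> P \<subseteq> R \<times> H \<and> X \<subseteq> R \<times> H \<and>
     P \<inter> propI q I = {} \<and>
     (\<forall>r h h'. (r, h) \<in> P \<longrightarrow> (r, h') \<in> P \<longrightarrow> h = h') \<and>
     X \<subseteq> tentI q I \<and>
     res P \<inter> res (tentI q I) \<subseteq> res X \<and>
     (\<forall>h\<in>H. card (res_at h (P \<union> (tentI q I - X))) \<le> q h \<and>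
             (res_at h X \<noteq> {} \<longrightarrow> card (res_at h (P \<union> (tentI q I - X))) = q h)) \<and>
     (\<forall>h\<in>H. (\<forall>a \<in> res_at h (P \<union> ((tentI q I - pendI q I) - X)).
                \<forall>b \<in> res_at h (X - pendI q I). precedes_in (hlist I h) a b) \<and>
             (res_at h (X - pendI q I) \<noteq> {} \<longrightarrow> res_at h (pendI q I) \<subseteq> res_at h X))"

definition tgs :: "('r \<times> 'h) set \<Rightarrow> ('r \<times> 'h) set \<Rightarrow> ('r \<times> 'h) set" where
  "tgs P X = {(r, h) \<in> X. r \<notin> res P}"

end

theory Submission
  imports Defs
begin

lemma precedes_total:
  assumes "x \<in> set L" "y \<in> set L" "x \<noteq> y"
  shows "precedes_in L x y \<or> precedes_in L y x"
proof -
  obtain i where i: "i < length L" "L ! i = x" using assms(1) by (auto simp: in_set_conv_nth)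
  obtain j where j: "j < length L" "L ! j = y" using assms(2) by (auto simp: in_set_conv_nth)
  have "i \<noteq> j" using i j assms(3) by auto
  then show ?thesis unfolding precedes_in_def using i j by (metis linorder_neqE_nat)
qed

lemma precedes_mem: "precedes_in L x y \<Longrightarrow> x \<in> set L \<and> y \<in> set L"
  unfolding precedes_in_def by auto

lemma precedes_append_left: "precedes_in L x y \<Longrightarrow> precedes_in (L @ ys) x y"
proof -
  assume "precedes_in L x y"
  then obtain i j where "i < j" "j < length L" "L ! i = x" "L ! j = y"
    unfolding precedes_in_def by blast
  then show ?thesis unfolding precedes_in_def
    by (rule_tac x=i in exI, rule_tac x=j in exI) (auto simp: nth_append)
qed

lemma precedes_append_cross:
  assumes "x \<in> set xs" "y \<in> set ys"
  shows "precedes_in (xs @ ys) x y"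
proof -
  obtain i where i: "i < length xs" "xs ! i = x" using assms(1) by (auto simp: in_set_conv_nth)
  obtain j where j: "j < length ys" "ys ! j = y" using assms(2) by (auto simp: in_set_conv_nth)
  show ?thesis unfolding precedes_in_def
    using i j by (rule_tac x=i in exI, rule_tac x="length xs + j" in exI) (auto simp: nth_append)
qed

lemma precedes_append_back:
  assumes "precedes_in (L @ ys) x y" "distinct (L @ ys)" "y \<in> set L"
  shows "precedes_in L x y"
proof -
  obtain i j where ij: "i < j" "j < length (L @ ys)" "(L @ ys) ! i = x" "(L @ ys) ! j = y"
    using assms(1) unfolding precedes_in_def by blast
  have "j < length L"
  proof (rule ccontr)
    assume "\<not> j < length L"
    then have "y = ys ! (j - length L)" "j - length L < length ys" using ij by (auto simp: nth_append)
    then have "y \<in> set ys" by auto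
    then show False using assms(2,3) by auto
  qed
  then show ?thesis unfolding precedes_in_def using ij
    by (rule_tac x=i in exI, rule_tac x=j in exI) (auto simp: nth_append)
qed

lemma res_at_mono: "M \<subseteq> M' \<Longrightarrow> res_at h M \<subseteq> res_at h M'"
  unfolding res_at_def by auto

lemma ousted_mono:
  assumes "ousted q I M r h" "M \<subseteq> M'"
  shows "ousted q I M' r h"
proof -
  have c: "card (set L \<inter> res_at h M) \<le> card (set L \<inter> res_at h M')" for L
    by (rule card_mono) (use res_at_mono[OF assms(2)] in auto)
  show ?thesis using assms c unfolding ousted_def by (meson le_trans subsetD)
qed

lemma ousted_ext:
  assumes "hlist J h = hlist I h @ ys" "ousted q I M r h"
  shows "ousted q J M r h"
proof -
  let ?L = "hlist I h"
  have c1: "card (set ?L \<inter> res_at h M) \<le> card (set (hlist J h) \<inter> res_at h M)"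
    by (rule card_mono) (auto simp: assms(1))
  show ?thesis
  proof (cases "r \<in> set ?L")
    case True
    then have "takeWhile (\<lambda>x. x \<noteq> r) (hlist J h) = takeWhile (\<lambda>x. x \<noteq> r) ?L"
      by (simp add: assms(1))
    then show ?thesis using assms(2) c1 True unfolding ousted_def by (auto simp: assms(1))
  next
    case False
    then have tw: "takeWhile (\<lambda>x. x \<noteq> r) (hlist J h) = ?L @ takeWhile (\<lambda>x. x \<noteq> r) ys"
      using False by (auto simp: assms(1) takeWhile_append)
    have "card (set ?L \<inter> res_at h M) \<le> card (set (takeWhile (\<lambda>x. x \<noteq> r) (hlist J h)) \<inter> res_at h M)"
      by (rule card_mono) (auto simp: tw)
    then show ?thesis using assms(2) c1 False unfolding ousted_def by auto
  qed
qed

lemma ousted_ext_back: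
  assumes "hlist J h = hlist I h @ ys" "r \<in> set (hlist I h)" "ousted q J M r h"
  shows "ousted q I M r h"
proof -
  let ?L = "hlist I h"
  have tw: "takeWhile (\<lambda>x. x \<noteq> r) (hlist J h) = takeWhile (\<lambda>x. x \<noteq> r) ?L"
    using assms(2) by (simp add: assms(1))
  have "card (set (takeWhile (\<lambda>x. x \<noteq> r) ?L) \<inter> res_at h M) \<le> card (set ?L \<inter> res_at h M)"
    by (rule card_mono) (auto dest: set_takeWhileD)
  then show ?thesis using assms tw unfolding ousted_def by auto
qed

lemma propS_P[simp]: "propS (\<sigma> @ [Propose r h]) = insert (r,h) (propS \<sigma>)"
  by (auto simp: propS_def)
lemma rejS_P[simp]: "rejS (\<sigma> @ [Propose r h]) = rejS \<sigma>"
  by (auto simp: rejS_def)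
lemma propS_R[simp]: "propS (\<sigma> @ [Reject r h]) = propS \<sigma>"
  by (auto simp: propS_def)
lemma rejS_R[simp]: "rejS (\<sigma> @ [Reject r h]) = insert (r,h) (rejS \<sigma>)"
  by (auto simp: rejS_def)

lemma feasible_inv:
  assumes "feasible q J \<sigma>"
  shows "rejS \<sigma> \<subseteq> propS \<sigma> \<and>
         (\<forall>r h. (r,h) \<in> rejS \<sigma> \<longrightarrow> ousted q J (propS \<sigma>) r h) \<and>
         (\<forall>r h. (r,h) \<in> propS \<sigma> \<longrightarrow> h \<in> set (rlist J r) \<and>
              (\<forall>h'. precedes_in (rlist J r) h' h \<longrightarrow> (r,h') \<in> rejS \<sigma>)) \<and>
         (\<forall>r h h'. (r,h) \<in> tentS \<sigma> \<longrightarrow> (r,h') \<in> tentS \<sigma> \<longrightarrow> h = h') \<and>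
         distinct \<sigma> \<and>
         (\<forall>e\<in>set \<sigma>. \<exists>r h. h \<in> set (rlist J r) \<and> (e = Propose r h \<or> e = Reject r h))"
  using assms
proof induction
  case feasible_Nil
  then show ?case by (simp add: propS_def rejS_def tentS_def)
next
  case (feasible_Prop \<sigma> r h)
  have nr: "(r,h) \<notin> rejS \<sigma>" using feasible_Prop by auto
  have m: "ousted q J (propS \<sigma>) a b \<Longrightarrow> ousted q J (insert (r,h) (propS \<sigma>)) a b" for a b
    by (erule ousted_mono) auto
  have t: "tentS (\<sigma> @ [Propose r h]) = insert (r,h) (tentS \<sigma>)"
    using nr by (auto simp: tentS_def)
  have d: "Propose r h \<notin> set \<sigma>" using feasible_Prop(3) by (auto simp: propS_def)
  show ?case using feasible_Prop m d unfolding t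
    by (auto simp: res_def)
next
  case (feasible_Rej \<sigma> r h)
  have t: "tentS (\<sigma> @ [Reject r h]) = tentS \<sigma> - {(r,h)}"
    by (auto simp: tentS_def)
  have d: "Reject r h \<notin> set \<sigma>" using feasible_Rej(3) by (auto simp: rejS_def)
  have p: "(r,h) \<in> propS \<sigma>" using feasible_Rej(2) by (simp add: ousted_def)
  show ?case using feasible_Rej d p unfolding t by auto
qed

lemma fi1: "feasible q J \<sigma> \<Longrightarrow> rejS \<sigma> \<subseteq> propS \<sigma>"
  using feasible_inv[of q J \<sigma>] by simp
lemma fi2: "feasible q J \<sigma> \<Longrightarrow> (r,h) \<in> rejS \<sigma> \<Longrightarrow> ousted q J (propS \<sigma>) r h"
  using feasible_inv[of q J \<sigma>] by simp
lemma fi3: "feasible q J \<sigma> \<Longrightarrow> (r,h) \<in> propS \<sigma> \<Longrightarrow> h \<in> set (rlist J r)"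
  using feasible_inv[of q J \<sigma>] by simp
lemma fi3b: "feasible q J \<sigma> \<Longrightarrow> (r,h) \<in> propS \<sigma> \<Longrightarrow> precedes_in (rlist J r) h' h \<Longrightarrow> (r,h') \<in> rejS \<sigma>"
  using feasible_inv[of q J \<sigma>] by simp
lemma fi4: "feasible q J \<sigma> \<Longrightarrow> (r,h) \<in> tentS \<sigma> \<Longrightarrow> (r,h') \<in> tentS \<sigma> \<Longrightarrow> h = h'"
  using feasible_inv[of q J \<sigma>] by simp
lemma fi5: "feasible q J \<sigma> \<Longrightarrow> distinct \<sigma>"
  using feasible_inv[of q J \<sigma>] by simp
lemma fi6: "feasible q J \<sigma> \<Longrightarrow> e \<in> set \<sigma> \<Longrightarrow> \<exists>r h. h \<in> set (rlist J r) \<and> (e = Propose r h \<or> e = Reject r h)"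
  using feasible_inv[of q J \<sigma>] by simp

lemma max_M1: "maximal_feasible q J \<sigma> \<Longrightarrow> ousted q J (propS \<sigma>) r h \<Longrightarrow> (r,h) \<in> rejS \<sigma>"
  unfolding maximal_feasible_def by (meson feasible_Rej)

lemma max_M2: "maximal_feasible q J \<sigma> \<Longrightarrow> r \<notin> res (tentS \<sigma>) \<Longrightarrow> h \<in> set (rlist J r) \<Longrightarrow>
   (\<forall>h'. precedes_in (rlist J r) h' h \<longrightarrow> (r,h') \<in> rejS \<sigma>) \<Longrightarrow> (r,h) \<in> propS \<sigma>"
  unfolding maximal_feasible_def by (meson feasible_Prop)

lemma feasible_le_max:
  assumes "feasible q J \<sigma>1" "maximal_feasible q J \<sigma>2"
  shows "propS \<sigma>1 \<subseteq> propS \<sigma>2 \<and> rejS \<sigma>1 \<subseteq> rejS \<sigma>2"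
  using assms(1)
proof induction
  case feasible_Nil
  then show ?case by (simp add: propS_def rejS_def)
next
  case (feasible_Prop \<sigma> r h)
  have f2: "feasible q J \<sigma>2" using assms(2) maximal_feasible_def by blast
  have "(r,h) \<in> propS \<sigma>2"
  proof (rule ccontr)
    assume np: "(r,h) \<notin> propS \<sigma>2"
    have pre: "\<forall>h'. precedes_in (rlist J r) h' h \<longrightarrow> (r,h') \<in> rejS \<sigma>2"
      using feasible_Prop.IH feasible_Prop.hyps(5) by blast
    have "r \<in> res (tentS \<sigma>2)"
      using max_M2[OF assms(2) _ \<open>h \<in> set (rlist J r)\<close> pre] np by blast
    then obtain h2 where h2: "(r,h2) \<in> tentS \<sigma>2" by (auto simp: res_def)
    then have h2p: "(r,h2) \<in> propS \<sigma>2" "(r,h2) \<notin> rejS \<sigma>2" by (auto simp: tentS_def)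
    have h2l: "h2 \<in> set (rlist J r)" using fi3[OF f2 h2p(1)] .
    have "h2 \<noteq> h" using h2p np by auto
    then consider "precedes_in (rlist J r) h2 h" | "precedes_in (rlist J r) h h2"
      using precedes_total[OF h2l \<open>h \<in> set (rlist J r)\<close>] by blast
    then show False
    proof cases
      case 1 then show ?thesis using pre h2p by blast
    next
      case 2 then have "(r,h) \<in> rejS \<sigma>2" using fi3b[OF f2 h2p(1)] by blast
      then show ?thesis using fi1[OF f2] np by blast
    qed
  qed
  then show ?case using feasible_Prop.IH by simp
next
  case (feasible_Rej \<sigma> r h)
  have "ousted q J (propS \<sigma>2) r h"
    using ousted_mono[OF feasible_Rej.hyps(2)] feasible_Rej.IH by blast
  then show ?case using max_M1[OF assms(2)] feasible_Rej.IH by simp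
qed

lemma max_exists:
  assumes "wf_instance R H q J"
  shows "maximal_feasible q J (msq q J)"
proof -
  define Ev where "Ev = (\<lambda>(r,h). Propose r h) ` (R \<times> H) \<union> (\<lambda>(r,h). Reject r h) ` (R \<times> H)"
  have fin: "finite Ev" using assms unfolding Ev_def wf_instance_def by auto
  have sub: "h \<in> set (rlist J r) \<Longrightarrow> r \<in> R \<and> h \<in> H" for r h
    using assms unfolding wf_instance_def by (metis empty_iff list.set(1) subsetD)
  have bound: "length \<sigma> < Suc (card Ev)" if f: "feasible q J \<sigma>" for \<sigma>
  proof -
    have "set \<sigma> \<subseteq> Ev"
    proof
      fix e assume "e \<in> set \<sigma>"
      then obtain r h where "h \<in> set (rlist J r)" "e = Propose r h \<or> e = Reject r h"
        using fi6[OF f] by blast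
      then show "e \<in> Ev" using sub unfolding Ev_def by fastforce
    qed
    then have "card (set \<sigma>) \<le> card Ev" using fin card_mono by blast
    then show ?thesis using distinct_card[OF fi5[OF f]] by simp
  qed
  obtain \<sigma> where s: "feasible q J \<sigma>" "\<forall>y. feasible q J y \<longrightarrow> length y \<le> length \<sigma>"
    using ex_has_greatest_nat[of "feasible q J" "[]" length "Suc (card Ev)", OF feasible_Nil] bound
    by blast
  have "maximal_feasible q J \<sigma>"
    unfolding maximal_feasible_def
  proof (intro conjI notI)
    show "feasible q J \<sigma>" by (rule s(1))
  next
    assume "\<exists>e. feasible q J (\<sigma> @ [e])"
    then obtain e where "feasible q J (\<sigma> @ [e])" by blast
    then have "length (\<sigma> @ [e]) \<le> length \<sigma>" using s(2) by blast
    then show False by simp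
  qed
  then show ?thesis unfolding msq_def by (rule someI[where P="maximal_feasible q J"])
qed

lemma max_rej:
  assumes "maximal_feasible q J \<sigma>"
  shows "rejS \<sigma> = {(r,h). ousted q J (propS \<sigma>) r h}"
proof -
  have f: "feasible q J \<sigma>" using assms maximal_feasible_def by blast
  show ?thesis
  proof (intro set_eqI iffI)
    fix x assume "x \<in> rejS \<sigma>"
    then show "x \<in> {(r,h). ousted q J (propS \<sigma>) r h}" using fi2[OF f] by (cases x) auto
  next
    fix x assume "x \<in> {(r,h). ousted q J (propS \<sigma>) r h}"
    then show "x \<in> rejS \<sigma>" using max_M1[OF assms] by (cases x) auto
  qed
qed

lemma tentI_char:
  assumes "wf_instance R H q J"
  shows "tentI q J = {(r,h) \<in> propI q J. \<not> ousted q J (propI q J) r h}"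
  using max_rej[OF max_exists[OF assms]] unfolding tentI_def propI_def tentS_def by auto

lemma tentI_unique:
  assumes "wf_instance R H q J" "(r,h) \<in> tentI q J" "(r,h') \<in> tentI q J"
  shows "h = h'"
proof -
  have "feasible q J (msq q J)" using max_exists[OF assms(1)] unfolding maximal_feasible_def by blast
  then show ?thesis using assms(2,3) unfolding tentI_def by (rule fi4)
qed

lemma propI_sub:
  assumes "wf_instance R H q J" "(r,h) \<in> propI q J"
  shows "h \<in> set (rlist J r)"
proof -
  have "feasible q J (msq q J)" using max_exists[OF assms(1)] unfolding maximal_feasible_def by blast
  then show ?thesis using assms(2) unfolding propI_def by (rule fi3)
qed

lemma count_first:
  assumes "distinct L"
  shows "min q (card (set L \<inter> S)) \<le> card {x \<in> set L \<inter> S. card (set (takeWhile (\<lambda>y. y \<noteq> x) L) \<inter> S) < q}"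
  using assms
proof (induction L arbitrary: q)
  case Nil
  then show ?case by simp
next
  case (Cons a L)
  have d: "distinct L" "a \<notin> set L" using Cons.prems by auto
  have tw: "takeWhile (\<lambda>y. y \<noteq> x) (a # L) = a # takeWhile (\<lambda>y. y \<noteq> x) L" if "x \<in> set L" for x
    using that d(2) by auto
  have nin: "a \<notin> set (takeWhile (\<lambda>y. y \<noteq> x) L)" for x using d(2) by (auto dest: set_takeWhileD)
  show ?case
  proof (cases "a \<in> S")
    case True
    show ?thesis
    proof (cases q)
      case 0 then show ?thesis by simp
    next
      case (Suc q')
      let ?M = "{x \<in> set L \<inter> S. card (set (takeWhile (\<lambda>y. y \<noteq> x) L) \<inter> S) < q'}"
      have eq: "{x \<in> set (a # L) \<inter> S. card (set (takeWhile (\<lambda>y. y \<noteq> x) (a # L)) \<inter> S) < q} = insert a ?M"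
      proof (intro set_eqI iffI)
        fix x assume x: "x \<in> {x \<in> set (a # L) \<inter> S. card (set (takeWhile (\<lambda>y. y \<noteq> x) (a # L)) \<inter> S) < q}"
        show "x \<in> insert a ?M"
        proof (cases "x = a")
          case False
          then have xl: "x \<in> set L" using x by auto
          have "set (takeWhile (\<lambda>y. y \<noteq> x) (a # L)) \<inter> S = insert a (set (takeWhile (\<lambda>y. y \<noteq> x) L) \<inter> S)"
            using tw[OF xl] True by auto
          then have "card (set (takeWhile (\<lambda>y. y \<noteq> x) (a # L)) \<inter> S) = Suc (card (set (takeWhile (\<lambda>y. y \<noteq> x) L) \<inter> S))"
            using nin[of x] by simp
          then show ?thesis using x xl Suc by auto
        qed simp
      next
        fix x assume x: "x \<in> insert a ?M"
        show "x \<in> {x \<in> set (a # L) \<inter> S. card (set (takeWhile (\<lambda>y. y \<noteq> x) (a # L)) \<inter> S) < q}"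
        proof (cases "x = a")
          case True
          then show ?thesis using \<open>a \<in> S\<close> Suc by simp
        next
          case False
          then have xl: "x \<in> set L" using x by auto
          have "set (takeWhile (\<lambda>y. y \<noteq> x) (a # L)) \<inter> S = insert a (set (takeWhile (\<lambda>y. y \<noteq> x) L) \<inter> S)"
            using tw[OF xl] True by auto
          then have "card (set (takeWhile (\<lambda>y. y \<noteq> x) (a # L)) \<inter> S) = Suc (card (set (takeWhile (\<lambda>y. y \<noteq> x) L) \<inter> S))"
            using nin[of x] by simp
          then have c: "card (set (takeWhile (\<lambda>y. y \<noteq> x) (a # L)) \<inter> S) < q" using x False Suc by simp
          have xs: "x \<in> S" using x False by blast
          have xa: "x \<in> set (a # L)" using xl by simp
          show ?thesis using c xs xa by blast
        qed
      qed
      have aM: "a \<notin> ?M" using d(2) by auto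
      have fM: "finite ?M" by simp
      have "set (a # L) \<inter> S = insert a (set L \<inter> S)" using True by auto
      then have c: "card (set (a # L) \<inter> S) = Suc (card (set L \<inter> S))" using d(2) by simp
      have "min q' (card (set L \<inter> S)) \<le> card ?M" using Cons.IH[OF d(1)] .
      then show ?thesis unfolding eq using aM fM c Suc by simp
    qed
  next
    case False
    have eq: "{x \<in> set (a # L) \<inter> S. card (set (takeWhile (\<lambda>y. y \<noteq> x) (a # L)) \<inter> S) < q}
        = {x \<in> set L \<inter> S. card (set (takeWhile (\<lambda>y. y \<noteq> x) L) \<inter> S) < q}"
    proof -
      have "set (takeWhile (\<lambda>y. y \<noteq> x) (a # L)) \<inter> S = set (takeWhile (\<lambda>y. y \<noteq> x) L) \<inter> S"
        if "x \<in> set L" for x using tw[OF that] False by auto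
      then show ?thesis using False by auto
    qed
    have "set (a # L) \<inter> S = set L \<inter> S" using False by auto
    then show ?thesis unfolding eq using Cons.IH[OF d(1)] by simp
  qed
qed

lemma wf_A: "wf_instance R H q I \<Longrightarrow> h \<in> set (rlist I r) \<Longrightarrow> r \<in> R \<and> h \<in> H"
  unfolding wf_instance_def by (metis empty_iff list.set(1) subsetD)

lemma ext_hlist:
  assumes "wf_instance R H q I" "wf_instance R H q I'" "is_extension R H I I'"
  shows "\<exists>ys. hlist I' h = hlist I h @ ys"
proof (cases "h \<in> H")
  case True then show ?thesis using assms(3) unfolding is_extension_def by blast
next
  case False then show ?thesis using assms(1,2) unfolding wf_instance_def by simp
qed

lemma ext_rlist:
  assumes "wf_instance R H q I" "wf_instance R H q I'" "resident_changeless R I I'"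
  shows "rlist I' r = rlist I r"
proof (cases "r \<in> R")
  case True then show ?thesis using assms(3) unfolding resident_changeless_def by blast
next
  case False then show ?thesis using assms(1,2) unfolding wf_instance_def by simp
qed

lemma ext_feasible:
  assumes "wf_instance R H q I" "wf_instance R H q I'" "is_extension R H I I'" "resident_changeless R I I'"
    and "feasible q I \<sigma>"
  shows "feasible q I' \<sigma>"
  using assms(5)
proof induction
  case feasible_Nil then show ?case by (rule feasible.feasible_Nil)
next
  case (feasible_Prop \<sigma> r h)
  have rl: "rlist I' r = rlist I r" using ext_rlist[OF assms(1,2,4)] .
  have a1: "h \<in> set (rlist I' r)" using rl feasible_Prop.hyps(4) by simp
  have a2: "\<forall>h'. precedes_in (rlist I' r) h' h \<longrightarrow> (r, h') \<in> rejS \<sigma>" using rl feasible_Prop.hyps(5) by simp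
  show ?case by (rule feasible.feasible_Prop[OF feasible_Prop.IH feasible_Prop.hyps(2,3) a1 a2])
next
  case (feasible_Rej \<sigma> r h)
  obtain ys where ys: "hlist I' h = hlist I h @ ys" using ext_hlist[OF assms(1,2,3)] by blast
  have "ousted q I' (propS \<sigma>) r h" by (rule ousted_ext[OF ys feasible_Rej.hyps(2)])
  then show ?case by (rule feasible.feasible_Rej[OF feasible_Rej.IH _ feasible_Rej.hyps(3)])
qed

lemma ext_prop:
  assumes "wf_instance R H q I" "wf_instance R H q I'" "is_extension R H I I'" "resident_changeless R I I'"
    and "resident_minimal q I"
  shows "propI q I' = {(r,h). h \<in> set (rlist I r)}"
proof -
  have m: "maximal_feasible q I (msq q I)" by (rule max_exists[OF assms(1)])
  have "feasible q I' (msq q I)"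
    using ext_feasible[OF assms(1-4)] m unfolding maximal_feasible_def by blast
  then have "propS (msq q I) \<subseteq> propI q I'"
    using feasible_le_max[OF _ max_exists[OF assms(2)]] unfolding propI_def by blast
  moreover have "propS (msq q I) = {(r,h). h \<in> set (rlist I r)}"
    using assms(5) unfolding resident_minimal_def propI_def by simp
  moreover have "propI q I' \<subseteq> {(r,h). h \<in> set (rlist I r)}"
    using propI_sub[OF assms(2)] ext_rlist[OF assms(1,2,4)] by auto
  ultimately show ?thesis by blast
qed

lemma res_at_fin: "M \<subseteq> R \<times> H \<Longrightarrow> finite R \<Longrightarrow> finite (res_at h M)"
  unfolding res_at_def by (rule finite_subset[of _ R]) auto

lemma reverse_dir:
  assumes wf: "wf_instance R H q I" and rm: "resident_minimal q I"
    and wf': "wf_instance R H q I'" and ex: "is_extension R H I I'" and rc: "resident_changeless R I I'"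
    and hc: "hospital_complete R H I'" and pr: "prescription R H q I' P Y" and tg: "(r0,h0) \<in> tgs P Y"
  shows "\<exists>P X. prescription R H q I P X \<and> (r0,h0) \<in> tgs P X"
proof -
  define A where "A = {(r,h). h \<in> set (rlist I r)}"
  have pA: "propI q I = A" using rm unfolding resident_minimal_def A_def .
  have pA': "propI q I' = A" using ext_prop[OF wf wf' ex rc rm] unfolding A_def .
  define T where "T = tentI q I"
  define T' where "T' = tentI q I'"
  have Tc: "T = {(r,h) \<in> A. \<not> ousted q I A r h}" using tentI_char[OF wf] pA T_def by simp
  have T'c: "T' = {(r,h) \<in> A. \<not> ousted q I' A r h}" using tentI_char[OF wf'] pA' T'_def by simp
  have AR: "A \<subseteq> R \<times> H" using wf_A[OF wf] unfolding A_def by auto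
  have finR: "finite R" using wf unfolding wf_instance_def by blast
  have hl: "\<exists>ys. hlist I' h = hlist I h @ ys" if "h \<in> H" for h
    using ex that unfolding is_extension_def by blast
  have hR: "set (hlist I' h) = R" if "h \<in> H" for h using hc that unfolding hospital_complete_def by blast
  have hd: "distinct (hlist I' h)" if "h \<in> H" for h using wf' that unfolding wf_instance_def by blast
  have F1: "T' \<subseteq> T"
  proof
    fix x assume "x \<in> T'"
    then obtain r h where x: "x = (r,h)" "(r,h) \<in> A" "\<not> ousted q I' A r h" using T'c by auto
    have "h \<in> H" using x AR by auto
    then obtain ys where ys: "hlist I' h = hlist I h @ ys" using hl by blast
    have "\<not> ousted q I A r h" using ousted_ext[OF ys, of q A r] x(3) by blast
    then show "x \<in> T" using x Tc by auto
  qed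
  have F2: "(r,h) \<in> T'" if "(r,h) \<in> T" "r \<in> set (hlist I h)" for r h
  proof -
    have A: "(r,h) \<in> A" "\<not> ousted q I A r h" using that Tc by auto
    have "h \<in> H" using A AR by auto
    then obtain ys where ys: "hlist I' h = hlist I h @ ys" using hl by blast
    have "\<not> ousted q I' A r h" using ousted_ext_back[OF ys that(2), of q A] A(2) by blast
    then show ?thesis using A T'c by auto
  qed
  have Pd: "pendI q I = {(r,h) \<in> T. r \<notin> set (hlist I h)}"
    unfolding pendI_def pendS_def T_def tentI_def by simp
  have Pd': "pendI q I' = {}"
  proof -
    have "r \<in> set (hlist I' h)" if "(r,h) \<in> T'" for r h
    proof -
      have "(r,h) \<in> R \<times> H" using that T'c AR by auto
      then show ?thesis using hR by auto
    qed
    moreover have "pendI q I' = {(r,h) \<in> T'. r \<notin> set (hlist I' h)}"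
      unfolding pendI_def pendS_def T'_def tentI_def by simp
    ultimately show ?thesis by blast
  qed
  have rm': "resident_minimal q I'" and PR: "P \<subseteq> R \<times> H" and P1': "P \<inter> A = {}"
    and P2: "\<forall>r h h'. (r, h) \<in> P \<longrightarrow> (r, h') \<in> P \<longrightarrow> h = h'"
    and P3': "Y \<subseteq> T'" and P4': "res P \<inter> res T' \<subseteq> res Y"
    and P5': "\<forall>h\<in>H. card (res_at h (P \<union> (T' - Y))) \<le> q h \<and>
             (res_at h Y \<noteq> {} \<longrightarrow> card (res_at h (P \<union> (T' - Y))) = q h)"
    and P6': "\<forall>h\<in>H. (\<forall>a \<in> res_at h (P \<union> ((T' - pendI q I') - Y)).
                \<forall>b \<in> res_at h (Y - pendI q I'). precedes_in (hlist I' h) a b)"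
  proof -
    note X = pr[unfolded prescription_def pA' T'_def[symmetric]]
    show "resident_minimal q I'" using X by (elim conjE)
    show "P \<subseteq> R \<times> H" using X by (elim conjE)
    show "P \<inter> A = {}" using X by (elim conjE)
    show "\<forall>r h h'. (r, h) \<in> P \<longrightarrow> (r, h') \<in> P \<longrightarrow> h = h'" using X by (elim conjE)
    show "Y \<subseteq> T'" using X by (elim conjE)
    show "res P \<inter> res T' \<subseteq> res Y" using X by (elim conjE)
    show "\<forall>h\<in>H. card (res_at h (P \<union> (T' - Y))) \<le> q h \<and>
             (res_at h Y \<noteq> {} \<longrightarrow> card (res_at h (P \<union> (T' - Y))) = q h)" using X by (elim conjE)
    show "\<forall>h\<in>H. (\<forall>a \<in> res_at h (P \<union> ((T' - pendI q I') - Y)).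
                \<forall>b \<in> res_at h (Y - pendI q I'). precedes_in (hlist I' h) a b)" using X by (elim conjE) blast
  qed
  have P6'': "precedes_in (hlist I' h) a b" if "h \<in> H" "a \<in> res_at h (P \<union> (T' - Y))" "b \<in> res_at h Y" for h a b
    using P6' that unfolding Pd' by simp
  define X where "X = Y \<union> (T - T')"
  have TX: "T - X = T' - Y" using F1 P3' unfolding X_def by auto
  have XT: "X \<subseteq> T" using F1 P3' unfolding X_def by auto
  have XR: "X \<subseteq> R \<times> H" using XT Tc AR by auto
  have P4: "res P \<inter> res T \<subseteq> res X"
  proof
    fix r assume "r \<in> res P \<inter> res T"
    then obtain h where h: "(r,h) \<in> T" and rP: "r \<in> res P" unfolding res_def by auto
    show "r \<in> res X"
    proof (cases "(r,h) \<in> T'")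
      case True
      then have "r \<in> res Y" using P4' rP unfolding res_def by blast
      then show ?thesis unfolding X_def res_def by blast
    next
      case False then show ?thesis using h unfolding X_def res_def by blast
    qed
  qed
  have P5: "\<forall>h\<in>H. card (res_at h (P \<union> (T - X))) \<le> q h \<and>
             (res_at h X \<noteq> {} \<longrightarrow> card (res_at h (P \<union> (T - X))) = q h)"
  proof
    fix h assume hH: "h \<in> H"
    have le: "card (res_at h (P \<union> (T - X))) \<le> q h" using P5' hH unfolding TX by blast
    moreover have "card (res_at h (P \<union> (T - X))) = q h" if ne: "res_at h X \<noteq> {}"
    proof (cases "res_at h Y = {}")
      case False then show ?thesis using P5' hH unfolding TX by blast
    next
      case True
      obtain r where "r \<in> res_at h X" using ne by blast
      then have rT: "(r,h) \<in> T - T'" using True unfolding X_def res_at_def by auto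
      then have rA: "(r,h) \<in> A" "ousted q I' A r h" using Tc T'c by auto
      then have qle: "q h \<le> card (set (hlist I' h) \<inter> res_at h A)" unfolding ousted_def by blast
      let ?S = "{x \<in> set (hlist I' h) \<inter> res_at h A. card (set (takeWhile (\<lambda>y. y \<noteq> x) (hlist I' h)) \<inter> res_at h A) < q h}"
      have "min (q h) (card (set (hlist I' h) \<inter> res_at h A)) \<le> card ?S"
        by (rule count_first[OF hd[OF hH]])
      then have c1: "q h \<le> card ?S" using qle by simp
      have sub: "?S \<subseteq> res_at h (P \<union> (T - X))"
      proof
        fix x assume x: "x \<in> ?S"
        then have "(x,h) \<in> A" "\<not> ousted q I' A x h" unfolding res_at_def ousted_def by auto
        then have "(x,h) \<in> T'" using T'c by auto
        moreover have "(x,h) \<notin> Y" using True unfolding res_at_def by auto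
        ultimately show "x \<in> res_at h (P \<union> (T - X))" unfolding TX res_at_def by auto
      qed
      have fin: "finite (res_at h (P \<union> (T - X)))"
        by (rule res_at_fin[OF _ finR, of _ H]) (use PR XR XT Tc AR in auto)
      have "q h \<le> card (res_at h (P \<union> (T - X)))" using c1 card_mono[OF fin sub] by linarith
      then show ?thesis using le by linarith
    qed
    ultimately show "card (res_at h (P \<union> (T - X))) \<le> q h \<and>
             (res_at h X \<noteq> {} \<longrightarrow> card (res_at h (P \<union> (T - X))) = q h)" by blast
  qed
  have P6: "\<forall>h\<in>H. (\<forall>a \<in> res_at h (P \<union> ((T - pendI q I) - X)).
                \<forall>b \<in> res_at h (X - pendI q I). precedes_in (hlist I h) a b) \<and>
             (res_at h (X - pendI q I) \<noteq> {} \<longrightarrow> res_at h (pendI q I) \<subseteq> res_at h X)"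
  proof
    fix h assume hH: "h \<in> H"
    obtain ys where ys: "hlist I' h = hlist I h @ ys" using hl hH by blast
    have dys: "distinct (hlist I h @ ys)" using hd[OF hH] ys by simp
    have bY: "(b,h) \<in> Y \<and> b \<in> set (hlist I h)" if "b \<in> res_at h (X - pendI q I)" for b
    proof -
      have b: "(b,h) \<in> X" "(b,h) \<notin> pendI q I" using that unfolding res_at_def by auto
      then have bT: "(b,h) \<in> T" using XT by auto
      then have bL: "b \<in> set (hlist I h)" using b(2) Pd by auto
      then have "(b,h) \<in> T'" using F2 bT by blast
      then show ?thesis using b(1) bL unfolding X_def by auto
    qed
    show "(\<forall>a \<in> res_at h (P \<union> ((T - pendI q I) - X)).
                \<forall>b \<in> res_at h (X - pendI q I). precedes_in (hlist I h) a b) \<and>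
             (res_at h (X - pendI q I) \<noteq> {} \<longrightarrow> res_at h (pendI q I) \<subseteq> res_at h X)"
    proof (intro conjI ballI impI subsetI)
      fix a b assume a: "a \<in> res_at h (P \<union> ((T - pendI q I) - X))" and b: "b \<in> res_at h (X - pendI q I)"
      have "a \<in> res_at h (P \<union> (T' - Y))" using a TX unfolding res_at_def by auto
      moreover have "b \<in> res_at h Y" using bY[OF b] unfolding res_at_def by auto
      ultimately have "precedes_in (hlist I' h) a b" using P6'' hH by blast
      then show "precedes_in (hlist I h) a b"
        using precedes_append_back[OF _ dys] bY[OF b] ys by simp
    next
      fix p assume ne: "res_at h (X - pendI q I) \<noteq> {}" and p: "p \<in> res_at h (pendI q I)"
      obtain b where b: "b \<in> res_at h (X - pendI q I)" using ne by blast
      have pP: "(p,h) \<in> T" "p \<notin> set (hlist I h)" using p Pd unfolding res_at_def by auto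
      show "p \<in> res_at h X"
      proof (rule ccontr)
        assume "p \<notin> res_at h X"
        then have "(p,h) \<in> T - X" using pP unfolding res_at_def by auto
        then have "p \<in> res_at h (P \<union> (T' - Y))" using TX unfolding res_at_def by auto
        moreover have "b \<in> res_at h Y" using bY[OF b] unfolding res_at_def by auto
        ultimately have "precedes_in (hlist I' h) p b" using P6'' hH by blast
        then have "precedes_in (hlist I h) p b"
          using precedes_append_back[OF _ dys] bY[OF b] ys by simp
        then show False using precedes_mem pP(2) by fast
      qed
    qed
  qed
  have XR2: "X \<subseteq> R \<times> H" by (rule XR)
  have pre: "prescription R H q I P X"
    unfolding prescription_def pA T_def[symmetric]
    using rm[unfolded resident_minimal_def pA] PR XR2 P1' P2 XT P4 P5 P6
    by (intro conjI) (simp_all add: resident_minimal_def pA)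
  have "(r0,h0) \<in> tgs P X" using tg unfolding tgs_def X_def by auto
  then show ?thesis using pre by blast
qed

lemma forward_dir:
  assumes wf: "wf_instance R H q I" and rm: "resident_minimal q I"
    and t0: "(r0, h0) \<in> tentI q I - pendI q I"
    and pr: "prescription R H q I P X" and tg: "(r0,h0) \<in> tgs P X"
  shows "\<exists>I' P Y. wf_instance R H q I' \<and> is_extension R H I I' \<and>
                   resident_changeless R I I' \<and> hospital_complete R H I' \<and>
                   prescription R H q I' P Y \<and> (r0, h0) \<in> tgs P Y"
proof -
  define A where "A = {(r,h). h \<in> set (rlist I r)}"
  have pA: "propI q I = A" using rm unfolding resident_minimal_def A_def .
  define T where "T = tentI q I"
  have Tc: "T = {(r,h) \<in> A. \<not> ousted q I A r h}" using tentI_char[OF wf] pA T_def by simp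
  have AR: "A \<subseteq> R \<times> H" using wf_A[OF wf] unfolding A_def by auto
  have finR: "finite R" using wf unfolding wf_instance_def by blast
  have TR: "T \<subseteq> R \<times> H" using Tc AR by auto
  define Pd where "Pd = pendI q I"
  have Pdc: "Pd = {(r,h) \<in> T. r \<notin> set (hlist I h)}"
    unfolding Pd_def pendI_def pendS_def T_def tentI_def by simp
  have PR: "P \<subseteq> R \<times> H" and XR: "X \<subseteq> R \<times> H" and P1: "P \<inter> A = {}"
    and P2: "\<forall>r h h'. (r, h) \<in> P \<longrightarrow> (r, h') \<in> P \<longrightarrow> h = h'"
    and P3: "X \<subseteq> T" and P4: "res P \<inter> res T \<subseteq> res X"
    and P5: "\<forall>h\<in>H. card (res_at h (P \<union> (T - X))) \<le> q h \<and>
             (res_at h X \<noteq> {} \<longrightarrow> card (res_at h (P \<union> (T - X))) = q h)"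
    and P6: "\<forall>h\<in>H. (\<forall>a \<in> res_at h (P \<union> ((T - Pd) - X)).
                \<forall>b \<in> res_at h (X - Pd). precedes_in (hlist I h) a b) \<and>
             (res_at h (X - Pd) \<noteq> {} \<longrightarrow> res_at h Pd \<subseteq> res_at h X)"
  proof -
    note Z = pr[unfolded prescription_def pA T_def[symmetric] Pd_def[symmetric]]
    show "P \<subseteq> R \<times> H" using Z by (elim conjE)
    show "X \<subseteq> R \<times> H" using Z by (elim conjE)
    show "P \<inter> A = {}" using Z by (elim conjE)
    show "\<forall>r h h'. (r, h) \<in> P \<longrightarrow> (r, h') \<in> P \<longrightarrow> h = h'" using Z by (elim conjE)
    show "X \<subseteq> T" using Z by (elim conjE)
    show "res P \<inter> res T \<subseteq> res X" using Z by (elim conjE)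
    show "\<forall>h\<in>H. card (res_at h (P \<union> (T - X))) \<le> q h \<and>
             (res_at h X \<noteq> {} \<longrightarrow> card (res_at h (P \<union> (T - X))) = q h)" using Z by (elim conjE)
    show "\<forall>h\<in>H. (\<forall>a \<in> res_at h (P \<union> ((T - Pd) - X)).
                \<forall>b \<in> res_at h (X - Pd). precedes_in (hlist I h) a b) \<and>
             (res_at h (X - Pd) \<noteq> {} \<longrightarrow> res_at h Pd \<subseteq> res_at h X)" using Z by (elim conjE)
  qed
  have hLR: "set (hlist I h) \<subseteq> R" "distinct (hlist I h)" if "h \<in> H" for h
    using wf that unfolding wf_instance_def by blast+
  define B1 where "B1 h = (res_at h P \<union> res_at h (Pd - X)) - set (hlist I h)" for h
  define B2 where "B2 h = res_at h (Pd \<inter> X)" for h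
  define B3 where "B3 h = R - set (hlist I h) - B1 h - B2 h" for h
  define lst where "lst S = (SOME xs. set xs = S \<and> distinct xs)" for S :: "'a set"
  have lst: "set (lst S) = S \<and> distinct (lst S)" if "finite S" for S
    unfolding lst_def using finite_distinct_list[OF that] by (rule someI_ex)
  have PdT: "Pd \<subseteq> T" using Pdc by auto
  have B1R: "B1 h \<subseteq> R" for h using PR PdT TR unfolding B1_def res_at_def by auto
  have B2R: "B2 h \<subseteq> R" for h using PdT TR unfolding B2_def res_at_def by auto
  have B3R: "B3 h \<subseteq> R" for h unfolding B3_def by auto
  have fB: "finite (B1 h)" "finite (B2 h)" "finite (B3 h)" for h
    using finite_subset[OF B1R finR] finite_subset[OF B2R finR] finite_subset[OF B3R finR] by auto
  have B2L: "B2 h \<inter> set (hlist I h) = {}" for h using Pdc unfolding B2_def res_at_def by auto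
  have B12: "B1 h \<inter> B2 h = {}" for h
  proof -
    have "(x,h) \<notin> P" if "(x,h) \<in> X" for x using that P3 Tc P1 by auto
    then show ?thesis unfolding B1_def B2_def res_at_def by auto
  qed
  define ys where "ys h = lst (B1 h) @ lst (B2 h) @ lst (B3 h)" for h
  have sys: "set (ys h) = B1 h \<union> B2 h \<union> B3 h" for h unfolding ys_def using lst fB by auto
  have dys: "distinct (hlist I h @ ys h)" if "h \<in> H" for h
  proof -
    have "distinct (lst (B1 h))" "distinct (lst (B2 h))" "distinct (lst (B3 h))" using lst fB by auto
    moreover have "set (lst (B1 h)) = B1 h" "set (lst (B2 h)) = B2 h" "set (lst (B3 h)) = B3 h" using lst fB by auto
    ultimately show ?thesis using hLR(2)[OF that] B2L[of h] B12[of h] unfolding ys_def B1_def B3_def by auto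
  qed
  have sL': "set (hlist I h @ ys h) = R" if "h \<in> H" for h
    using sys[of h] hLR(1)[OF that] B1R[of h] B2R[of h] unfolding B3_def by auto
  define I' where "I' = \<lparr>rlist = rlist I, hlist = (\<lambda>h. if h \<in> H then hlist I h @ ys h else [])\<rparr>"
  have I'r: "rlist I' = rlist I" unfolding I'_def by simp
  have I'h: "hlist I' h = hlist I h @ ys h" if "h \<in> H" for h unfolding I'_def using that by simp
  have wf': "wf_instance R H q I'"
    using wf dys sL' unfolding wf_instance_def I'_def by auto
  have ex: "is_extension R H I I'" unfolding is_extension_def I'r using I'h by auto
  have rc: "resident_changeless R I I'" unfolding resident_changeless_def I'r by simp
  have hc: "hospital_complete R H I'" unfolding hospital_complete_def using I'h sL' by auto
  have pA': "propI q I' = A" using ext_prop[OF wf wf' ex rc rm] unfolding A_def .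
  define T' where "T' = tentI q I'"
  have T'c: "T' = {(r,h) \<in> A. \<not> ousted q I' A r h}" using tentI_char[OF wf'] pA' T'_def by simp
  have Pd': "pendI q I' = {}"
  proof -
    have "r \<in> set (hlist I' h)" if "(r,h) \<in> T'" for r h
    proof -
      have "(r,h) \<in> R \<times> H" using that T'c AR by auto
      then show ?thesis using I'h sL' by auto
    qed
    moreover have "pendI q I' = {(r,h) \<in> T'. r \<notin> set (hlist I' h)}"
      unfolding pendI_def pendS_def T'_def tentI_def by simp
    ultimately show ?thesis by blast
  qed
  have F1: "T' \<subseteq> T"
  proof
    fix x assume "x \<in> T'"
    then obtain r h where x: "x = (r,h)" "(r,h) \<in> A" "\<not> ousted q I' A r h" using T'c by auto
    have "h \<in> H" using x AR by auto
    then have ys: "hlist I' h = hlist I h @ ys h" by (rule I'h)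
    have "\<not> ousted q I A r h" using ousted_ext[OF ys, of q A r] x(3) by blast
    then show "x \<in> T" using x Tc by auto
  qed
  have F2: "(r,h) \<in> T'" if "(r,h) \<in> T" "r \<in> set (hlist I h)" for r h
  proof -
    have A: "(r,h) \<in> A" "\<not> ousted q I A r h" using that Tc by auto
    have "h \<in> H" using A AR by auto
    then have ys: "hlist I' h = hlist I h @ ys h" by (rule I'h)
    have "\<not> ousted q I' A r h" using ousted_ext_back[OF ys that(2), of q A] A(2) by blast
    then show ?thesis using A T'c by auto
  qed
  have F3: "(r,h) \<in> T'" if rT: "(r,h) \<in> T - X" for r h
  proof (cases "r \<in> set (hlist I h)")
    case True then show ?thesis using F2 rT by blast
  next
    case False
    have rA: "(r,h) \<in> A" "\<not> ousted q I A r h" using rT Tc by auto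
    have hH: "h \<in> H" using rA AR by auto
    have rPd: "(r,h) \<in> Pd" using Pdc rT False by auto
    have rB1: "r \<in> B1 h" unfolding B1_def res_at_def using rPd rT False by auto
    let ?L = "hlist I h"
    let ?Ah = "res_at h A"
    have noq: "\<not> q h \<le> card (set ?L \<inter> ?Ah)" using rA False unfolding ousted_def by auto
    have noX: "(x,h) \<notin> X" if "x \<in> set ?L" "(x,h) \<in> T" for x
    proof
      assume xX: "(x,h) \<in> X"
      have "(x,h) \<notin> Pd" using Pdc that by auto
      then have "res_at h (X - Pd) \<noteq> {}" using xX unfolding res_at_def by auto
      then have "res_at h Pd \<subseteq> res_at h X" using P6 hH by blast
      then show False using rPd rT unfolding res_at_def by auto
    qed
    have tw: "takeWhile (\<lambda>x. x \<noteq> r) (hlist I' h) = ?L @ takeWhile (\<lambda>x. x \<noteq> r) (lst (B1 h))"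
    proof -
      have rin: "r \<in> set (lst (B1 h))" using rB1 lst fB by auto
      have e1: "takeWhile (\<lambda>x. x \<noteq> r) (?L @ (lst (B1 h) @ lst (B2 h) @ lst (B3 h)))
          = ?L @ takeWhile (\<lambda>x. x \<noteq> r) (lst (B1 h) @ (lst (B2 h) @ lst (B3 h)))"
        by (rule takeWhile_append2) (use False in auto)
      have e2: "takeWhile (\<lambda>x. x \<noteq> r) (lst (B1 h) @ (lst (B2 h) @ lst (B3 h)))
          = takeWhile (\<lambda>x. x \<noteq> r) (lst (B1 h))"
        by (rule takeWhile_append1[OF rin]) simp
      show ?thesis unfolding I'h[OF hH] ys_def e1 e2 ..
    qed
    have sub: "set (takeWhile (\<lambda>x. x \<noteq> r) (hlist I' h)) \<inter> ?Ah \<subseteq> res_at h (T - X) - {r}"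
    proof
      fix x assume x: "x \<in> set (takeWhile (\<lambda>x. x \<noteq> r) (hlist I' h)) \<inter> ?Ah"
      then have xA: "(x,h) \<in> A" unfolding res_at_def by auto
      have "x \<in> set ?L \<or> (x \<in> set (takeWhile (\<lambda>x. x \<noteq> r) (lst (B1 h))))" using x tw by auto
      then show "x \<in> res_at h (T - X) - {r}"
      proof
        assume xL: "x \<in> set ?L"
        have "\<not> ousted q I A x h" using noq unfolding ousted_def by auto
        then have xT: "(x,h) \<in> T" using xA Tc by auto
        then show ?thesis using noX[OF xL xT] xL False unfolding res_at_def by auto
      next
        assume xt: "x \<in> set (takeWhile (\<lambda>x. x \<noteq> r) (lst (B1 h)))"
        then have xr: "x \<noteq> r" by (auto dest: set_takeWhileD)
        have "x \<in> B1 h" using xt lst fB by (auto dest: set_takeWhileD)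
        moreover have "(x,h) \<notin> P" using xA P1 by auto
        ultimately have "(x,h) \<in> Pd - X" unfolding B1_def res_at_def by auto
        then show ?thesis using xr PdT unfolding res_at_def by auto
      qed
    qed
    have fin1: "finite (res_at h (T - X))" by (rule res_at_fin[OF _ finR, of _ H]) (use TR in auto)
    have fin2: "finite (res_at h (P \<union> (T - X)))" by (rule res_at_fin[OF _ finR, of _ H]) (use TR PR in auto)
    have rin: "r \<in> res_at h (T - X)" using rT unfolding res_at_def by auto
    have "card (set (takeWhile (\<lambda>x. x \<noteq> r) (hlist I' h)) \<inter> ?Ah) \<le> card (res_at h (T - X) - {r})"
      by (rule card_mono[OF _ sub]) (use fin1 in auto)
    also have "\<dots> < card (res_at h (T - X))" by (rule card_Diff1_less[OF fin1 rin])
    also have "\<dots> \<le> card (res_at h (P \<union> (T - X)))"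
      by (rule card_mono[OF fin2]) (auto simp: res_at_def)
    also have "\<dots> \<le> q h" using P5 hH by blast
    finally have lt: "card (set (takeWhile (\<lambda>x. x \<noteq> r) (hlist I' h)) \<inter> ?Ah) < q h" .
    have rL': "r \<in> set (hlist I' h)" using I'h[OF hH] sys rB1 by auto
    have "\<not> ousted q I' A r h" using lt rL' unfolding ousted_def by auto
    then show ?thesis using rA T'c by auto
  qed
  define Y where "Y = X \<inter> T'"
  have key: "T' - Y = T - X" using F1 F3 unfolding Y_def by auto
  have Y3: "Y \<subseteq> T'" unfolding Y_def by auto
  have YR: "Y \<subseteq> R \<times> H" using XR unfolding Y_def by auto
  have P4': "res P \<inter> res T' \<subseteq> res Y"
  proof
    fix r assume "r \<in> res P \<inter> res T'"
    then obtain h1 h2 where h1: "(r,h1) \<in> P" and h2: "(r,h2) \<in> T'" unfolding res_def by auto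
    have "r \<in> res X" using P4 h1 h2 F1 unfolding res_def by blast
    then obtain h3 where h3: "(r,h3) \<in> X" unfolding res_def by auto
    have "h2 = h3" using tentI_unique[OF wf, of r h2 h3] h2 h3 F1 P3 unfolding T_def by blast
    then show "r \<in> res Y" using h2 h3 unfolding Y_def res_def by auto
  qed
  have P5': "\<forall>h\<in>H. card (res_at h (P \<union> (T' - Y))) \<le> q h \<and>
             (res_at h Y \<noteq> {} \<longrightarrow> card (res_at h (P \<union> (T' - Y))) = q h)"
  proof
    fix h assume hH: "h \<in> H"
    have "res_at h Y \<noteq> {} \<Longrightarrow> res_at h X \<noteq> {}" unfolding Y_def res_at_def by auto
    then show "card (res_at h (P \<union> (T' - Y))) \<le> q h \<and>
             (res_at h Y \<noteq> {} \<longrightarrow> card (res_at h (P \<union> (T' - Y))) = q h)"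
      unfolding key using P5 hH by blast
  qed
  have P6': "\<forall>h\<in>H. (\<forall>a \<in> res_at h (P \<union> ((T' - pendI q I') - Y)).
                \<forall>b \<in> res_at h (Y - pendI q I'). precedes_in (hlist I' h) a b) \<and>
             (res_at h (Y - pendI q I') \<noteq> {} \<longrightarrow> res_at h (pendI q I') \<subseteq> res_at h Y)"
  proof
    fix h assume hH: "h \<in> H"
    have main: "precedes_in (hlist I h @ ys h) a b" if a: "a \<in> res_at h (P \<union> (T - X))" and b: "(b,h) \<in> Y" for a b
    proof (cases "b \<in> set (hlist I h)")
      case True
      have bX: "b \<in> res_at h (X - Pd)" using b True Pdc unfolding Y_def res_at_def by auto
      have "a \<in> res_at h (P \<union> ((T - Pd) - X))"
      proof (cases "(a,h) \<in> Pd")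
        case True
        have "res_at h Pd \<subseteq> res_at h X" using P6 hH bX by blast
        then have "(a,h) \<in> X" using True unfolding res_at_def by auto
        moreover have "(a,h) \<notin> P" using True PdT Tc P1 by auto
        ultimately show ?thesis using a unfolding res_at_def by auto
      next
        case False
        then show ?thesis using a unfolding res_at_def by auto
      qed
      then have "precedes_in (hlist I h) a b" using P6 hH bX by blast
      then show ?thesis by (rule precedes_append_left)
    next
      case False
      have "(b,h) \<in> Pd \<inter> X" using b False Pdc P3 unfolding Y_def by auto
      then have bB2: "b \<in> set (lst (B2 h) @ lst (B3 h))" using lst fB unfolding B2_def res_at_def by auto
      have aL: "a \<in> set (hlist I h @ lst (B1 h))"
      proof (cases "a \<in> set (hlist I h)")
        case True then show ?thesis by simp
      next
        case False
        have "a \<in> res_at h P \<or> (a,h) \<in> Pd - X" using a False Pdc unfolding res_at_def by auto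
        then have "a \<in> B1 h" using False unfolding B1_def res_at_def by auto
        then show ?thesis using lst fB by auto
      qed
      show ?thesis using precedes_append_cross[OF aL bB2] unfolding ys_def by simp
    qed
    show "(\<forall>a \<in> res_at h (P \<union> ((T' - pendI q I') - Y)).
                \<forall>b \<in> res_at h (Y - pendI q I'). precedes_in (hlist I' h) a b) \<and>
             (res_at h (Y - pendI q I') \<noteq> {} \<longrightarrow> res_at h (pendI q I') \<subseteq> res_at h Y)"
      unfolding Pd' I'h[OF hH] using main key unfolding res_at_def by auto
  qed
  have rm': "resident_minimal q I'" unfolding resident_minimal_def pA' I'r A_def by simp
  have pre: "prescription R H q I' P Y"
    unfolding prescription_def pA' T'_def[symmetric]
    using rm' PR YR P1 P2 Y3 P4' P5' P6' by (intro conjI)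
  have "(r0,h0) \<in> Y"
  proof -
    have "(r0,h0) \<in> X" "r0 \<notin> res P" using tg unfolding tgs_def by auto
    moreover have "(r0,h0) \<in> T'" using t0 F2 Pdc unfolding T_def[symmetric] Pd_def[symmetric] by auto
    ultimately show ?thesis unfolding Y_def by auto
  qed
  then have "(r0,h0) \<in> tgs P Y" using tg unfolding tgs_def by auto
  then show ?thesis using wf' ex rc hc pre by blast
qed

theorem theorem3:
  fixes R :: "'r set" and H :: "'h set" and q :: "'h \<Rightarrow> nat"
    and I :: "('r, 'h) sm_instance" and r0 :: 'r and h0 :: 'h
  assumes "wf_instance R H q I"
    and "resident_minimal q I"
    and "(r0, h0) \<in> tentI q I - pendI q I"
  shows "(\<exists>P X. prescription R H q I P X \<and> (r0, h0) \<in> tgs P X) \<longleftrightarrow>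
         (\<exists>I' P Y. wf_instance R H q I' \<and> is_extension R H I I' \<and>
                   resident_changeless R I I' \<and> hospital_complete R H I' \<and>
                   prescription R H q I' P Y \<and> (r0, h0) \<in> tgs P Y)"
proof
  assume "\<exists>P X. prescription R H q I P X \<and> (r0, h0) \<in> tgs P X"
  then obtain P X where "prescription R H q I P X" "(r0, h0) \<in> tgs P X" by blast
  then show "\<exists>I' P Y. wf_instance R H q I' \<and> is_extension R H I I' \<and>
                   resident_changeless R I I' \<and> hospital_complete R H I' \<and>
                   prescription R H q I' P Y \<and> (r0, h0) \<in> tgs P Y"
    using forward_dir[OF assms] by blast
next
  assume "\<exists>I' P Y. wf_instance R H q I' \<and> is_extension R H I I' \<and>
                   resident_changeless R I I' \<and> hospital_complete R H I' \<and>
                   prescription R H q I' P Y \<and> (r0, h0) \<in> tgs P Y"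
  then obtain I' P Y where "wf_instance R H q I'" "is_extension R H I I'"
    "resident_changeless R I I'" "hospital_complete R H I'"
    "prescription R H q I' P Y" "(r0, h0) \<in> tgs P Y" by blast
  then show "\<exists>P X. prescription R H q I P X \<and> (r0, h0) \<in> tgs P X"
    using reverse_dir[OF assms(1,2)] by blast
qed

end
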